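(* Let $r\geq 2$ be an integer and $C>1$. Let $\epsilon'>0$ be sufficiently small compared to $C^{-3}6^{-r}$ (i.e. $0<\epsilon'<\epsilon_0$ for a suitable $\epsilon_0=\epsilon_0(r,C)>0$), and let $n_0$ be sufficiently large. Let $G$ be a complete $r$-partite graph with parts $X_1,\ldots,X_r$, each of size at least $n_0$, whose edges are colored yellow, pink and white, such that: (1) $|X_1|\geq |X_2|\geq\cdots\geq |X_r|$; (2) $\frac{1}{C}\leq \frac{|X_i|}{|X_j|}\leq C$ for all $i,j\in[r]$; (3) for all $i,j\in[r]$ with $1\leq j<i$ and every $v\in X_i$, the vertex $v$ is incident to at most $\left(\frac{1}{r-1}-\frac{\epsilon' C^3}{r-1}\right)|X_j|$ pink edges going to $X_j$; (4) the total number of yellow edges is at most $\epsilon' 6^{-r}\sum_{1\leq i<j\leq r}|X_i||X_j|$. Then $G$ contains a copy of $K_r$ all of whose edges are white.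
   Context: $[r]=\{1,\ldots,r\}$. $K_r$ denotes the complete graph on $r$ vertices. *)

theory Defs
  imports Complex_Main
begin

datatype colour = Yellow | Pink | White

text \<open>A complete r-partite graph on vertex set nat with parts X 1, ..., X r
  (finite, pairwise disjoint); every pair of vertices in different parts is an edge.\<close>
definition coloured_complete_rpartite ::
  "nat \<Rightarrow> (nat \<Rightarrow> nat set) \<Rightarrow> (nat \<Rightarrow> nat \<Rightarrow> colour) \<Rightarrow> bool" where
  "coloured_complete_rpartite r X col \<longleftrightarrow>
     (\<forall>i\<in>{1..r}. finite (X i)) \<and>
     (\<forall>i\<in>{1..r}. \<forall>j\<in>{1..r}. i \<noteq> j \<longrightarrow> X i \<inter> X j = {}) \<and>
     (\<forall>i\<in>{1..r}. \<forall>j\<in>{1..r}. \<forall>u\<in>X i. \<forall>v\<in>X j. i \<noteq> j \<longrightarrow> col u v = col v u)"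

definition is_edge :: "nat \<Rightarrow> (nat \<Rightarrow> nat set) \<Rightarrow> nat \<Rightarrow> nat \<Rightarrow> bool" where
  "is_edge r X u v \<longleftrightarrow> (\<exists>i\<in>{1..r}. \<exists>j\<in>{1..r}. i \<noteq> j \<and> u \<in> X i \<and> v \<in> X j)"

definition yellow_edges :: "nat \<Rightarrow> (nat \<Rightarrow> nat set) \<Rightarrow> (nat \<Rightarrow> nat \<Rightarrow> colour) \<Rightarrow> nat" where
  "yellow_edges r X col = card {(u, v). \<exists>i j. 1 \<le> i \<and> i < j \<and> j \<le> r \<and>
        u \<in> X i \<and> v \<in> X j \<and> col u v = Yellow}"

definition has_white_Kr :: "nat \<Rightarrow> (nat \<Rightarrow> nat set) \<Rightarrow> (nat \<Rightarrow> nat \<Rightarrow> colour) \<Rightarrow> bool" where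
  "has_white_Kr r X col \<longleftrightarrow> (\<exists>S. S \<subseteq> (\<Union>i\<in>{1..r}. X i) \<and> card S = r \<and>
      (\<forall>u\<in>S. \<forall>v\<in>S. u \<noteq> v \<longrightarrow> is_edge r X u v \<and> col u v = White))"

end

theory Submission
  imports Defs "HOL-Library.FuncSet"
begin

lemma ext_card:
  fixes X :: "nat \<Rightarrow> 'a set" and R :: "'a \<Rightarrow> 'a \<Rightarrow> bool"
  assumes fin: "finite I" and kI: "k \<notin> I" and finX: "\<forall>i\<in>insert k I. finite (X i)"
    and lt: "\<forall>i\<in>I. k < i"
  shows "card {f\<in>PiE (insert k I) X. \<forall>i\<in>insert k I. \<forall>j\<in>insert k I. j<i \<longrightarrow> R (f i) (f j)}
     = (\<Sum>g\<in>{f\<in>PiE I X. \<forall>i\<in>I. \<forall>j\<in>I. j<i \<longrightarrow> R (f i) (f j)}. card {v\<in>X k. \<forall>i\<in>I. R (g i) v})"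
proof -
  define S1 where "S1 = {f\<in>PiE (insert k I) X. \<forall>i\<in>insert k I. \<forall>j\<in>insert k I. j<i \<longrightarrow> R (f i) (f j)}"
  define S0 where "S0 = {f\<in>PiE I X. \<forall>i\<in>I. \<forall>j\<in>I. j<i \<longrightarrow> R (f i) (f j)}"
  define G where "G g = {v\<in>X k. \<forall>i\<in>I. R (g i) v}" for g :: "nat \<Rightarrow> 'a"
  have eq: "S1 = (\<lambda>(g,v). g(k:=v)) ` (SIGMA g:S0. G g)"
  proof
    show "S1 \<subseteq> (\<lambda>(g,v). g(k:=v)) ` (SIGMA g:S0. G g)"
    proof
      fix f assume f: "f \<in> S1"
      define g where "g = f(k:=undefined)"
      have fP: "f \<in> PiE (insert k I) X" using f S1_def by auto
      have gP: "g \<in> PiE I X" using fP kI unfolding g_def PiE_def extensional_def Pi_def by auto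
      have "g \<in> S0" using f gP kI unfolding S0_def S1_def g_def by auto
      moreover have "f k \<in> G g" using f fP lt kI unfolding G_def S1_def g_def
        by (auto simp: PiE_def Pi_def)
      moreover have "f = g(k := f k)" unfolding g_def by auto
      ultimately show "f \<in> (\<lambda>(g,v). g(k:=v)) ` (SIGMA g:S0. G g)"
        by (intro image_eqI[where x="(g, f k)"]) auto
    qed
  next
    show "(\<lambda>(g,v). g(k:=v)) ` (SIGMA g:S0. G g) \<subseteq> S1"
    proof clarify
      fix g v assume g: "g \<in> S0" and v: "v \<in> G g"
      have "g(k:=v) \<in> PiE (insert k I) X" using g v unfolding S0_def G_def by (simp add: PiE_fun_upd)
      moreover have "\<forall>i\<in>insert k I. \<forall>j\<in>insert k I. j<i \<longrightarrow> R ((g(k:=v)) i) ((g(k:=v)) j)"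
        using g v lt kI unfolding S0_def G_def by force
      ultimately show "g(k:=v) \<in> S1" unfolding S1_def by auto
    qed
  qed
  have inj: "inj_on (\<lambda>(g,v). g(k:=v)) (SIGMA g:S0. G g)"
  proof (rule inj_onI, clarify)
    fix g v g' v' assume g: "g \<in> S0" and g': "g' \<in> S0" and e: "g(k:=v) = g'(k:=v')"
    have "v = v'" using fun_cong[OF e, of k] by simp
    moreover have "g = g'"
    proof
      fix x show "g x = g' x"
      proof (cases "x = k")
        case True
        then show ?thesis using g g' kI unfolding S0_def PiE_def extensional_def by auto
      next
        case False then show ?thesis using fun_cong[OF e, of x] by simp
      qed
    qed
    ultimately show "g = g' \<and> v = v'" by simp
  qed
  have finS0: "finite S0" unfolding S0_def using fin finX by (intro finite_subset[OF _ finite_PiE[of I X]]) auto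
  have finG: "\<forall>g\<in>S0. finite (G g)" unfolding G_def using finX by auto
  have "card S1 = card (SIGMA g:S0. G g)" using eq inj card_image by metis
  also have "\<dots> = (\<Sum>g\<in>S0. card (G g))" using finS0 finG by simp
  finally show ?thesis unfolding S1_def S0_def G_def .
qed

lemma fact_bound: "real n ^ n \<le> 3 ^ n * fact n"
proof -
  have s: "(\<lambda>k. real n ^ k / fact k) sums exp (real n)" using exp_converges[of "real n"] by (simp add: divide_inverse mult.commute)
  have "(\<Sum>k\<in>{n}. real n ^ k / fact k) \<le> exp (real n)"
    using sum_le_suminf[OF sums_summable[OF s], of "{n}"] sums_unique[OF s] by simp
  hence "real n ^ n / fact n \<le> exp (real n)" by (simp add: divide_inverse mult.commute)
  also have "exp (real n) = exp 1 ^ n" using exp_of_nat_mult[of n 1] by simp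
  also have "\<dots> \<le> 3 ^ n" using exp_le by (intro power_mono) auto
  finally show ?thesis by (simp add: divide_le_eq mult.commute)
qed

lemma lower_bound:
  fixes X :: "nat \<Rightarrow> 'a set" and R :: "'a \<Rightarrow> 'a \<Rightarrow> bool" and c :: "nat \<Rightarrow> real"
  defines "S \<equiv> \<lambda>J. {f\<in>PiE J X. \<forall>i\<in>J. \<forall>j\<in>J. j<i \<longrightarrow> R (f i) (f j)}"
  assumes finX: "\<forall>i\<in>{1..r}. finite (X i)"
    and c0: "\<forall>t\<in>{1..r}. c t \<ge> 0"
    and good: "\<forall>t\<in>{1..r}. \<forall>g\<in>S {Suc t..r}. real (card {v\<in>X t. \<forall>i\<in>{Suc t..r}. R (g i) v}) \<ge> c t * real (card (X t))"
  shows "real (card (S {1..r})) \<ge> (\<Prod>t\<in>{1..r}. c t * real (card (X t)))"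
proof -
  have "1 \<le> Suc r" by simp
  then have "real (card (S {1..r})) \<ge> (\<Prod>t\<in>{1..r}. c t * real (card (X t)))"
  proof (induction rule: inc_induct)
    case base
    have "S {Suc r..r} = {\<lambda>_. undefined}" unfolding S_def by auto
    then show ?case by simp
  next
    case (step n)
    have I: "{n..r} = insert n {Suc n..r}" using step by auto
    have "card (S {n..r}) = (\<Sum>g\<in>S {Suc n..r}. card {v\<in>X n. \<forall>i\<in>{Suc n..r}. R (g i) v})"
      unfolding S_def I using finX step by (intro ext_card) auto
    hence "real (card (S {n..r})) = (\<Sum>g\<in>S {Suc n..r}. real (card {v\<in>X n. \<forall>i\<in>{Suc n..r}. R (g i) v}))"
      by simp
    also have "\<dots> \<ge> (\<Sum>g\<in>S {Suc n..r}. c n * real (card (X n)))"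
      using good step by (intro sum_mono) auto
    finally have "real (card (S {n..r})) \<ge> real (card (S {Suc n..r})) * (c n * real (card (X n)))"
      by simp
    moreover have "real (card (S {Suc n..r})) * (c n * real (card (X n))) \<ge> 
       (\<Prod>t\<in>{Suc n..r}. c t * real (card (X t))) * (c n * real (card (X n)))"
      using step c0 by (intro mult_right_mono) auto
    moreover have "(\<Prod>t\<in>{n..r}. c t * real (card (X t))) = 
       (\<Prod>t\<in>{Suc n..r}. c t * real (card (X t))) * (c n * real (card (X n)))"
      unfolding I by simp
    ultimately show ?case by linarith
  qed
  then show ?thesis .
qed

lemma fibre_card:
  fixes X :: "nat \<Rightarrow> 'a set"
  assumes fin: "finite I" and i: "i \<in> I" and j: "j \<in> I" and ij: "i \<noteq> j"
    and u: "u \<in> X i" and v: "v \<in> X j"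
  shows "card {f\<in>PiE I X. f i = u \<and> f j = v} * card (X i) * card (X j) = (\<Prod>k\<in>I. card (X k))"
proof -
  define F where "F = {f\<in>PiE I X. f i = u \<and> f j = v}"
  have eq: "F = (\<lambda>g. g(i:=u, j:=v)) ` PiE (I - {i,j}) X"
  proof
    show "F \<subseteq> (\<lambda>g. g(i:=u, j:=v)) ` PiE (I - {i,j}) X"
    proof
      fix f assume f: "f \<in> F"
      define g where "g = f(i:=undefined, j:=undefined)"
      have "g \<in> PiE (I - {i,j}) X" using f unfolding F_def g_def PiE_def extensional_def Pi_def by auto
      moreover have "f = g(i:=u, j:=v)" using f unfolding F_def g_def by auto
      ultimately show "f \<in> (\<lambda>g. g(i:=u, j:=v)) ` PiE (I - {i,j}) X" by blast
    qed
  next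
    show "(\<lambda>g. g(i:=u, j:=v)) ` PiE (I - {i,j}) X \<subseteq> F"
      using i j ij u v unfolding F_def PiE_def extensional_def Pi_def by auto
  qed
  have inj: "inj_on (\<lambda>g. g(i:=u, j:=v)) (PiE (I - {i,j}) X)"
  proof (rule inj_onI)
    fix g g' assume g: "g \<in> PiE (I - {i,j}) X" and g': "g' \<in> PiE (I - {i,j}) X"
      and e: "g(i:=u, j:=v) = g'(i:=u, j:=v)"
    show "g = g'"
    proof
      fix x show "g x = g' x"
      proof (cases "x = i \<or> x = j")
        case True
        then show ?thesis using g g' unfolding PiE_def extensional_def by auto
      next
        case False then show ?thesis using fun_cong[OF e, of x] by simp
      qed
    qed
  qed
  have "card F = card (PiE (I - {i,j}) X)" using eq inj card_image by metis
  also have "\<dots> = (\<Prod>k\<in>I - {i,j}. card (X k))" using fin by (simp add: card_PiE)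
  finally have cF: "card F = (\<Prod>k\<in>I - {i,j}. card (X k))" .
  have "(\<Prod>k\<in>I. card (X k)) = card (X i) * (\<Prod>k\<in>I - {i}. card (X k))"
    using fin i by (simp add: prod.remove)
  also have "(\<Prod>k\<in>I - {i}. card (X k)) = card (X j) * (\<Prod>k\<in>I - {i} - {j}. card (X k))"
    using fin j ij by (intro prod.remove) auto
  also have "I - {i} - {j} = I - {i,j}" by auto
  finally show ?thesis unfolding F_def[symmetric] cF by simp
qed

lemma sq_le_pow: "(r::nat)^2 \<le> 3 * 2^r"
proof (induction r)
  case 0 then show ?case by simp
next
  case (Suc n)
  show ?case
  proof (cases "n \<le> 2")
    case True
    then have "n = 0 \<or> n = 1 \<or> n = 2" by auto
    then show ?thesis by (auto simp: power2_eq_square)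
  next
    case False
    then have n3: "3 \<le> n" by simp
    have "3 * n \<le> n * n" using mult_le_mono1[OF n3, of n] by simp
    moreover have "(Suc n)^2 = n * n + 2 * n + 1" "2 * n^2 = 2 * (n * n)" by (simp_all add: power2_eq_square)
    ultimately have "(Suc n)^2 \<le> 2 * n^2" using n3 by linarith
    then show ?thesis using Suc by simp
  qed
qed

lemma prod_frac_bound:
  assumes "r \<ge> 2"
  shows "(\<Prod>t\<in>{2..r}. (real t - 1) / (real r - 1)) \<ge> 1 / 3 ^ (r - 1)"
proof -
  obtain q where q: "r = Suc q" using assms by (cases r) auto
  have q1: "q \<ge> 1" using assms q by simp
  have e: "{2..r} = {Suc 1..Suc q}" using q by auto
  have "(\<Prod>t\<in>{2..r}. (real t - 1)) = (\<Prod>t\<in>{Suc 1..Suc q}. (real t - 1))" by (simp only: e)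
  also have "\<dots> = (\<Prod>i\<in>{1..q}. (real (Suc i) - 1))" by (rule prod.shift_bounds_cl_Suc_ivl)
  also have "\<dots> = (\<Prod>i\<in>{1..q}. real i)" by simp
  also have "\<dots> = fact q" by (simp add: fact_prod)
  finally have P: "(\<Prod>t\<in>{2..r}. (real t - 1)) = fact q" .
  have "(\<Prod>t\<in>{2..r}. (real t - 1) / (real r - 1)) = fact q / real q ^ q"
    using P q by (simp add: prod_dividef)
  also have "\<dots> \<ge> fact q / (3 ^ q * fact q)"
    using fact_bound[of q] q1 by (intro divide_left_mono) auto
  also have "fact q / (3 ^ q * fact q) = 1 / (3::real) ^ q" by simp
  finally show ?thesis using q by simp
qed

theorem lemma3:
  fixes r :: nat and C :: real
  assumes "r \<ge> 2" and "C > 1"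
  shows "\<exists>\<epsilon>0 > 0. \<forall>\<epsilon>' :: real. 0 < \<epsilon>' \<and> \<epsilon>' < \<epsilon>0 \<longrightarrow>
    (\<exists>n0 :: nat. \<forall>X :: nat \<Rightarrow> nat set. \<forall>col :: nat \<Rightarrow> nat \<Rightarrow> colour.
      coloured_complete_rpartite r X col \<and>
      (\<forall>i\<in>{1..r}. card (X i) \<ge> n0) \<and>
      (\<forall>i\<in>{1..r}. \<forall>j\<in>{1..r}. i \<le> j \<longrightarrow> card (X i) \<ge> card (X j)) \<and>
      (\<forall>i\<in>{1..r}. \<forall>j\<in>{1..r}. 1 / C \<le> real (card (X i)) / real (card (X j)) \<and>
                                 real (card (X i)) / real (card (X j)) \<le> C) \<and>
      (\<forall>i\<in>{1..r}. \<forall>j\<in>{1..r}. j < i \<longrightarrow> (\<forall>v\<in>X i.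
         real (card {w\<in>X j. col v w = Pink})
           \<le> (1 / (real r - 1) - \<epsilon>' * C ^ 3 / (real r - 1)) * real (card (X j)))) \<and>
      real (yellow_edges r X col)
        \<le> \<epsilon>' * 6 powr (- real r) * (\<Sum>i\<in>{1..r}. \<Sum>j\<in>{i<..r}. real (card (X i)) * real (card (X j)))
      \<longrightarrow> has_white_Kr r X col)"
proof (intro exI[of _ "1::real"] conjI allI impI)
  fix \<epsilon> :: real
  assume "0 < \<epsilon> \<and> \<epsilon> < 1"
  hence e0: "\<epsilon> > 0" by simp
  show "\<exists>n0 :: nat. \<forall>X :: nat \<Rightarrow> nat set. \<forall>col :: nat \<Rightarrow> nat \<Rightarrow> colour.
      coloured_complete_rpartite r X col \<and>
      (\<forall>i\<in>{1..r}. card (X i) \<ge> n0) \<and>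
      (\<forall>i\<in>{1..r}. \<forall>j\<in>{1..r}. i \<le> j \<longrightarrow> card (X i) \<ge> card (X j)) \<and>
      (\<forall>i\<in>{1..r}. \<forall>j\<in>{1..r}. 1 / C \<le> real (card (X i)) / real (card (X j)) \<and>
                                 real (card (X i)) / real (card (X j)) \<le> C) \<and>
      (\<forall>i\<in>{1..r}. \<forall>j\<in>{1..r}. j < i \<longrightarrow> (\<forall>v\<in>X i.
         real (card {w\<in>X j. col v w = Pink})
           \<le> (1 / (real r - 1) - \<epsilon> * C ^ 3 / (real r - 1)) * real (card (X j)))) \<and>
      real (yellow_edges r X col)
        \<le> \<epsilon> * 6 powr (- real r) * (\<Sum>i\<in>{1..r}. \<Sum>j\<in>{i<..r}. real (card (X i)) * real (card (X j)))
      \<longrightarrow> has_white_Kr r X col"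
  proof (intro exI[of _ "0::nat"] allI impI)
    fix X :: "nat \<Rightarrow> nat set" and col :: "nat \<Rightarrow> nat \<Rightarrow> colour"
    assume H: "coloured_complete_rpartite r X col \<and>
      (\<forall>i\<in>{1..r}. card (X i) \<ge> 0) \<and>
      (\<forall>i\<in>{1..r}. \<forall>j\<in>{1..r}. i \<le> j \<longrightarrow> card (X i) \<ge> card (X j)) \<and>
      (\<forall>i\<in>{1..r}. \<forall>j\<in>{1..r}. 1 / C \<le> real (card (X i)) / real (card (X j)) \<and>
                                 real (card (X i)) / real (card (X j)) \<le> C) \<and>
      (\<forall>i\<in>{1..r}. \<forall>j\<in>{1..r}. j < i \<longrightarrow> (\<forall>v\<in>X i.
         real (card {w\<in>X j. col v w = Pink})
           \<le> (1 / (real r - 1) - \<epsilon> * C ^ 3 / (real r - 1)) * real (card (X j)))) \<and>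
      real (yellow_edges r X col)
        \<le> \<epsilon> * 6 powr (- real r) * (\<Sum>i\<in>{1..r}. \<Sum>j\<in>{i<..r}. real (card (X i)) * real (card (X j)))"
    define \<beta> where "\<beta> = 1 / (real r - 1) - \<epsilon> * C ^ 3 / (real r - 1)"
    have finX: "\<forall>i\<in>{1..r}. finite (X i)" and disj: "\<forall>i\<in>{1..r}. \<forall>j\<in>{1..r}. i \<noteq> j \<longrightarrow> X i \<inter> X j = {}"
      and sym: "\<forall>i\<in>{1..r}. \<forall>j\<in>{1..r}. \<forall>u\<in>X i. \<forall>v\<in>X j. i \<noteq> j \<longrightarrow> col u v = col v u"
      using H unfolding coloured_complete_rpartite_def by auto
    have mono: "\<forall>i\<in>{1..r}. \<forall>j\<in>{1..r}. i \<le> j \<longrightarrow> card (X i) \<ge> card (X j)" using H by blast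
    have ratio: "\<forall>i\<in>{1..r}. \<forall>j\<in>{1..r}. 1 / C \<le> real (card (X i)) / real (card (X j)) \<and>
                                 real (card (X i)) / real (card (X j)) \<le> C" using H by blast
    have pink: "\<forall>i\<in>{1..r}. \<forall>j\<in>{1..r}. j < i \<longrightarrow> (\<forall>v\<in>X i.
         real (card {w\<in>X j. col v w = Pink}) \<le> \<beta> * real (card (X j)))" using H unfolding \<beta>_def by blast
    have yel: "real (yellow_edges r X col)
        \<le> \<epsilon> * 6 powr (- real r) * (\<Sum>i\<in>{1..r}. \<Sum>j\<in>{i<..r}. real (card (X i)) * real (card (X j)))"
      using H by blast
    have Cpos: "C > 0" using assms by simp
    have pos: "card (X i) > 0" if "i \<in> {1..r}" for i
    proof (rule ccontr)
      assume "\<not> card (X i) > 0"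
      hence "card (X i) = 0" by simp
      hence "1 / C \<le> 0" using ratio that by force
      thus False using Cpos by simp
    qed
    have r1: "real r - 1 \<ge> 1" using assms by simp
    have beta0: "\<beta> \<ge> 0"
    proof -
      obtain v where v: "v \<in> X 2" using pos[of 2] assms card_gt_0_iff by fastforce
      have "real (card {w\<in>X 1. col v w = Pink}) \<le> \<beta> * real (card (X 1))"
        using pink[rule_format, of 2 1 v] assms v by simp
      hence "0 \<le> \<beta> * real (card (X 1))" by (meson of_nat_0_le_iff order_trans)
      moreover have "real (card (X 1)) > 0" using pos[of 1] assms by simp
      ultimately show ?thesis by (simp add: zero_le_mult_iff)
    qed
    have rb: "(real r - 1) * \<beta> = 1 - \<epsilon> * C ^ 3"
      unfolding \<beta>_def using r1 by (simp add: field_simps)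
    have C3: "\<epsilon> * C ^ 3 \<ge> 0" using e0 Cpos by simp
    define c where "c t = 1 - (real r - real t) * \<beta>" for t :: nat
    have c0: "\<forall>t\<in>{1..r}. c t \<ge> 0"
    proof
      fix t assume t: "t \<in> {1..r}"
      have "(real r - real t) * \<beta> \<le> (real r - 1) * \<beta>" using t beta0 by (intro mult_right_mono) auto
      thus "c t \<ge> 0" unfolding c_def using rb C3 by linarith
    qed
    define R where "R u v = (col u v \<noteq> Pink)" for u v
    define S where "S J = {f\<in>PiE J X. \<forall>i\<in>J. \<forall>j\<in>J. j<i \<longrightarrow> R (f i) (f j)}" for J
    have good: "\<forall>t\<in>{1..r}. \<forall>g\<in>S {Suc t..r}. real (card {v\<in>X t. \<forall>i\<in>{Suc t..r}. R (g i) v}) \<ge> c t * real (card (X t))"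
    proof (intro ballI)
      fix t g assume t: "t \<in> {1..r}" and g: "g \<in> S {Suc t..r}"
      define G where "G = {v\<in>X t. \<forall>i\<in>{Suc t..r}. R (g i) v}"
      define P where "P i = {w\<in>X t. col (g i) w = Pink}" for i
      have sub: "X t \<subseteq> G \<union> (\<Union>i\<in>{Suc t..r}. P i)" unfolding G_def P_def R_def by auto
      have finXt: "finite (X t)" using finX t by auto
      have "card (X t) \<le> card (G \<union> (\<Union>i\<in>{Suc t..r}. P i))"
        using sub finXt by (intro card_mono) (auto simp: G_def P_def)
      also have "\<dots> \<le> card G + card (\<Union>i\<in>{Suc t..r}. P i)" by (rule card_Un_le)
      also have "card (\<Union>i\<in>{Suc t..r}. P i) \<le> (\<Sum>i\<in>{Suc t..r}. card (P i))" by (rule card_UN_le) simp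
      finally have "real (card (X t)) \<le> real (card G) + (\<Sum>i\<in>{Suc t..r}. real (card (P i)))"
        by (simp add: of_nat_sum[symmetric] del: of_nat_sum)
      also have "(\<Sum>i\<in>{Suc t..r}. real (card (P i))) \<le> (\<Sum>i\<in>{Suc t..r}. \<beta> * real (card (X t)))"
      proof (rule sum_mono)
        fix i assume i: "i \<in> {Suc t..r}"
        have "g i \<in> X i" using g i unfolding S_def PiE_def Pi_def by auto
        moreover have "i \<in> {1..r}" "t < i" using t i by auto
        ultimately show "real (card (P i)) \<le> \<beta> * real (card (X t))"
          using pink[rule_format, of i t "g i"] t unfolding P_def by blast
      qed
      also have "(\<Sum>i\<in>{Suc t..r}. \<beta> * real (card (X t))) = (real r - real t) * \<beta> * real (card (X t))"
        using t by (simp add: of_nat_diff)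
      finally show "real (card G) \<ge> c t * real (card (X t))" unfolding c_def by (simp add: algebra_simps)
    qed
    have LB0: "real (card (S {1..r})) \<ge> (\<Prod>t\<in>{1..r}. c t * real (card (X t)))"
      unfolding S_def using lower_bound[of r X c R] finX c0 good unfolding S_def by blast
    define PP where "PP = (\<Prod>t\<in>{1..r}. real (card (X t)))"
    have Pipos: "PP > 0" unfolding PP_def using pos by (intro prod_pos) auto
    have c1: "c 1 = \<epsilon> * C ^ 3" unfolding c_def using rb by simp
    have "(\<Prod>t\<in>{1..r}. c t) = c 1 * (\<Prod>t\<in>{2..r}. c t)"
    proof -
      have "{1..r} = insert 1 {2..r}" using assms by auto
      thus ?thesis by simp
    qed
    also have "(\<Prod>t\<in>{2..r}. c t) \<ge> (\<Prod>t\<in>{2..r}. (real t - 1) / (real r - 1))"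
    proof (rule prod_mono)
      fix t assume t: "t \<in> {2..r}"
      have "\<beta> \<le> 1 / (real r - 1)" unfolding \<beta>_def using C3 r1 by (simp add: divide_right_mono)
      hence "(real r - real t) * \<beta> \<le> (real r - real t) * (1 / (real r - 1))"
        using t by (intro mult_left_mono) auto
      moreover have "1 - (real r - real t) * (1 / (real r - 1)) = (real t - 1) / (real r - 1)"
        using r1 by (simp add: field_simps)
      moreover have "(real t - 1) / (real r - 1) \<ge> 0" using t r1 by simp
      ultimately show "0 \<le> (real t - 1) / (real r - 1) \<and> (real t - 1) / (real r - 1) \<le> c t"
        unfolding c_def by linarith
    qed
    hence "c 1 * (\<Prod>t\<in>{2..r}. c t) \<ge> c 1 * (1 / 3 ^ (r - 1))"
      using prod_frac_bound[OF assms(1)] c1 C3 by (intro mult_left_mono) auto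
    finally have prodc: "(\<Prod>t\<in>{1..r}. c t) \<ge> \<epsilon> * C ^ 3 / 3 ^ (r - 1)" using c1 by simp
    have LB: "real (card (S {1..r})) \<ge> \<epsilon> * C ^ 3 / 3 ^ (r - 1) * PP"
    proof -
      have "(\<Prod>t\<in>{1..r}. c t * real (card (X t))) = (\<Prod>t\<in>{1..r}. c t) * PP"
        unfolding PP_def by (simp add: prod.distrib)
      moreover have "(\<Prod>t\<in>{1..r}. c t) * PP \<ge> \<epsilon> * C ^ 3 / 3 ^ (r - 1) * PP"
        using prodc Pipos by (intro mult_right_mono) auto
      ultimately show ?thesis using LB0 by linarith
    qed
    define T where "T = PiE {1..r} X"
    define Yb where "Yb = {f\<in>T. \<exists>i j. 1 \<le> i \<and> i < j \<and> j \<le> r \<and> col (f i) (f j) = Yellow}"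
    define YS where "YS = {(u, v). \<exists>i j. 1 \<le> i \<and> i < j \<and> j \<le> r \<and> u \<in> X i \<and> v \<in> X j \<and> col u v = Yellow}"
    have YSc: "yellow_edges r X col = card YS" unfolding yellow_edges_def YS_def by simp
    define B where "B p = {f\<in>T. \<exists>i j. 1 \<le> i \<and> i < j \<and> j \<le> r \<and> f i = fst p \<and> f j = snd p}" for p
    have finT: "finite T" unfolding T_def using finX by (intro finite_PiE) auto
    have YbB: "Yb \<subseteq> (\<Union>p\<in>YS. B p)"
    proof
      fix f assume f: "f \<in> Yb"
      then obtain i j where ij: "1 \<le> i" "i < j" "j \<le> r" "col (f i) (f j) = Yellow" and fT: "f \<in> T"
        unfolding Yb_def by auto
      have "f i \<in> X i" "f j \<in> X j" using fT ij unfolding T_def PiE_def Pi_def by auto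
      hence "(f i, f j) \<in> YS" unfolding YS_def using ij by blast
      moreover have "f \<in> B (f i, f j)" unfolding B_def using fT ij by auto
      ultimately show "f \<in> (\<Union>p\<in>YS. B p)" by blast
    qed
    have finYS: "finite YS"
    proof (rule finite_subset)
      show "YS \<subseteq> (\<Union>i\<in>{1..r}. X i) \<times> (\<Union>i\<in>{1..r}. X i)" unfolding YS_def by force
      show "finite ((\<Union>i\<in>{1..r}. X i) \<times> (\<Union>i\<in>{1..r}. X i))" using finX by auto
    qed
    define m where "m = card (X r)"
    have rin: "r \<in> {1..r}" "1 \<in> {1..r}" using assms by auto
    have mpos: "real m > 0" unfolding m_def using pos[OF rin(1)] by simp
    have mle: "\<forall>i\<in>{1..r}. m \<le> card (X i)" unfolding m_def using mono rin by auto
    have PiN: "PP = real (\<Prod>t\<in>{1..r}. card (X t))" unfolding PP_def by simp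
    have Bb: "real (card (B p)) \<le> PP / (real m * real m)" if p: "p \<in> YS" for p
    proof -
      obtain u v where uv: "p = (u, v)" by force
      then obtain i0 j0 where ij0: "1 \<le> i0" "i0 < j0" "j0 \<le> r" "u \<in> X i0" "v \<in> X j0"
        using p unfolding YS_def by auto
      define F where "F = {f\<in>PiE {1..r} X. f i0 = u \<and> f j0 = v}"
      have BF: "B p \<subseteq> F"
      proof
        fix f assume f: "f \<in> B p"
        then obtain i j where ij: "1 \<le> i" "i < j" "j \<le> r" "f i = u" "f j = v" and fT: "f \<in> T"
          unfolding B_def uv by auto
        have "f i \<in> X i" "f j \<in> X j" using fT ij unfolding T_def PiE_def Pi_def by auto
        hence "i = i0" "j = j0" using disj ij ij0 by (metis IntI atLeastAtMost_iff empty_iff less_imp_le_nat order.trans)+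
        thus "f \<in> F" using ij fT unfolding F_def T_def by auto
      qed
      have finF: "finite F" unfolding F_def using finX by (intro finite_subset[OF _ finite_PiE[of "{1..r}" X]]) auto
      have "card (B p) \<le> card F" using BF finF by (rule card_mono[rotated])
      have fc: "card F * card (X i0) * card (X j0) = (\<Prod>k\<in>{1..r}. card (X k))"
        unfolding F_def using ij0 by (intro fibre_card) auto
      have "real (card (B p)) * (real m * real m) \<le> real (card F) * (real (card (X i0)) * real (card (X j0)))"
        using \<open>card (B p) \<le> card F\<close> mle ij0 by (intro mult_mono) auto
      also have "\<dots> = PP" unfolding PiN fc[symmetric] by simp
      finally show ?thesis using mpos by (simp add: field_simps)
    qed
    have "card Yb \<le> card (\<Union>p\<in>YS. B p)" using YbB finYS finT
      by (intro card_mono) (auto simp: B_def)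
    also have "\<dots> \<le> (\<Sum>p\<in>YS. card (B p))" by (rule card_UN_le[OF finYS])
    finally have "real (card Yb) \<le> (\<Sum>p\<in>YS. real (card (B p)))"
      by (simp add: of_nat_sum[symmetric] del: of_nat_sum)
    also have "\<dots> \<le> (\<Sum>p\<in>YS. PP / (real m * real m))" using Bb by (intro sum_mono) auto
    also have "\<dots> = real (yellow_edges r X col) * (PP / (real m * real m))" using YSc by simp
    finally have Ybc: "real (card Yb) \<le> real (yellow_edges r X col) * (PP / (real m * real m))" .
    define N where "N = real (card (X 1))"
    have NC: "N \<le> C * real m"
      using ratio rin mpos unfolding N_def m_def by (simp add: divide_le_eq)
    have N0: "N \<ge> 0" unfolding N_def by simp
    have sumb: "(\<Sum>i\<in>{1..r}. \<Sum>j\<in>{i<..r}. real (card (X i)) * real (card (X j))) \<le> real r * real r * (N * N)"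
    proof -
      have "(\<Sum>i\<in>{1..r}. \<Sum>j\<in>{i<..r}. real (card (X i)) * real (card (X j))) \<le> (\<Sum>i\<in>{1..r}. real r * (N * N))"
      proof (rule sum_mono)
        fix i assume i: "i \<in> {1..r}"
        have "(\<Sum>j\<in>{i<..r}. real (card (X i)) * real (card (X j))) \<le> real (card {i<..r}) * (N * N)"
        proof (rule sum_bounded_above)
          fix j assume j: "j \<in> {i<..r}"
          have "card (X i) \<le> card (X 1)" "card (X j) \<le> card (X 1)" using mono i j rin by auto
          thus "real (card (X i)) * real (card (X j)) \<le> N * N" unfolding N_def by (intro mult_mono) auto
        qed
        also have "\<dots> \<le> real r * (N * N)" using N0 by (intro mult_right_mono) auto
        finally show "(\<Sum>j\<in>{i<..r}. real (card (X i)) * real (card (X j))) \<le> real r * (N * N)" .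
      qed
      also have "\<dots> = real r * real r * (N * N)" by simp
      finally show ?thesis .
    qed
    have p6: "6 powr (- real r) = 1 / 6 ^ r" by (simp add: powr_minus powr_realpow divide_inverse)
    have NN: "N * N \<le> C * C * (real m * real m)"
    proof -
      have "N * N \<le> (C * real m) * (C * real m)" using NC N0 by (intro mult_mono) auto
      thus ?thesis by (simp add: algebra_simps)
    qed
    have y2: "real (yellow_edges r X col) \<le> \<epsilon> * (1 / 6 ^ r) * (real r * real r) * (C * C * (real m * real m))"
    proof -
      have a: "\<epsilon> * (1 / 6 ^ r) \<ge> 0" using e0 by simp
      have "real (yellow_edges r X col) \<le> \<epsilon> * (1 / 6 ^ r) * (real r * real r * (N * N))"
        using yel mult_left_mono[OF sumb a] unfolding p6 by linarith
      also have "\<dots> \<le> \<epsilon> * (1 / 6 ^ r) * (real r * real r * (C * C * (real m * real m)))"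
        using a NN by (intro mult_left_mono) auto
      finally show ?thesis by (simp add: mult.assoc)
    qed
    have UB: "real (card Yb) \<le> \<epsilon> * (1 / 6 ^ r) * (real r * real r) * (C * C) * PP"
    proof -
      have "real (card Yb) \<le> \<epsilon> * (1 / 6 ^ r) * (real r * real r) * (C * C * (real m * real m)) * (PP / (real m * real m))"
      proof -
        have "PP / (real m * real m) \<ge> 0" using Pipos mpos by simp
        from mult_right_mono[OF y2 this] show ?thesis using Ybc by linarith
      qed
      also have "\<dots> = \<epsilon> * (1 / 6 ^ r) * (real r * real r) * (C * C) * PP" using mpos by (simp add: field_simps)
      finally show ?thesis .
    qed
    have key: "(real r * real r) * (1 / 6 ^ r) \<le> 1 / 3 ^ (r - 1)"
    proof -
      have "real (r^2) \<le> real (3 * 2^r)" using sq_le_pow[of r] by linarith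
      hence k1: "real r * real r \<le> 3 * 2 ^ r" by (simp add: power2_eq_square)
      have "(6::real) ^ r = 3 * 2 ^ r * 3 ^ (r - 1)"
      proof -
        have "(6::real) ^ r = 2 ^ r * 3 ^ r" by (simp add: power_mult_distrib[symmetric])
        also have "(3::real) ^ r = 3 * 3 ^ (r - 1)" using assms by (simp add: power_eq_if)
        finally show ?thesis by simp
      qed
      hence "(real r * real r) * 3 ^ (r - 1) \<le> 6 ^ r" using k1 by (simp add: mult_right_mono)
      thus ?thesis by (simp add: field_simps)
    qed
    have "real (card Yb) < real (card (S {1..r}))"
    proof -
      have q: "\<epsilon> * (C * C) * PP > 0" using e0 Cpos Pipos by simp
      have "\<epsilon> * (1 / 6 ^ r) * (real r * real r) * (C * C) * PP = ((real r * real r) * (1 / 6 ^ r)) * (\<epsilon> * (C * C) * PP)"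
        by (simp add: algebra_simps)
      also have "\<dots> \<le> (1 / 3 ^ (r - 1)) * (\<epsilon> * (C * C) * PP)" using key q by (intro mult_right_mono) auto
      also have "\<dots> < (1 / 3 ^ (r - 1)) * (\<epsilon> * (C * C) * PP) * C"
        using mult_strict_left_mono[OF assms(2), of "(1 / 3 ^ (r - 1)) * (\<epsilon> * (C * C) * PP)"] q by simp
      also have "\<dots> = \<epsilon> * C ^ 3 / 3 ^ (r - 1) * PP" by (simp add: power3_eq_cube field_simps)
      finally show ?thesis using UB LB by linarith
    qed
    hence "\<not> S {1..r} \<subseteq> Yb" using finT unfolding Yb_def by (metis (no_types, lifting) card_mono finite_subset mem_Collect_eq not_le of_nat_le_iff subsetI)
    then obtain f where fS: "f \<in> S {1..r}" and fY: "f \<notin> Yb" by blast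
    have fT: "f \<in> T" using fS unfolding S_def T_def by auto
    have fX: "\<And>i. i \<in> {1..r} \<Longrightarrow> f i \<in> X i" using fT unfolding T_def by auto
    have noP: "\<And>i j. i \<in> {1..r} \<Longrightarrow> j \<in> {1..r} \<Longrightarrow> j < i \<Longrightarrow> col (f i) (f j) \<noteq> Pink"
      using fS unfolding S_def R_def by auto
    have noY: "\<And>i j. i \<in> {1..r} \<Longrightarrow> j \<in> {1..r} \<Longrightarrow> i < j \<Longrightarrow> col (f i) (f j) \<noteq> Yellow"
      using fY fT unfolding Yb_def by auto
    have injf: "inj_on f {1..r}"
    proof (rule inj_onI, rule ccontr)
      fix a b assume a: "a \<in> {1..r}" and b: "b \<in> {1..r}" and e: "f a = f b" and ne: "a \<noteq> b"
      have "f a \<in> X a \<inter> X b" using fX[OF a] fX[OF b] e by simp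
      thus False using disj a b ne by blast
    qed
    have white: "col (f a) (f b) = White" if a: "a \<in> {1..r}" and b: "b \<in> {1..r}" and ne: "a \<noteq> b" for a b
    proof -
      have s: "col (f a) (f b) = col (f b) (f a)" using sym a b ne fX by blast
      have "col (f a) (f b) \<noteq> Pink \<and> col (f a) (f b) \<noteq> Yellow"
      proof (cases "a < b")
        case True then show ?thesis using noP[OF b a] noY[OF a b] s by simp
      next
        case False then have "b < a" using ne by simp
        then show ?thesis using noP[OF a b] noY[OF b a] s by simp
      qed
      then show ?thesis by (cases "col (f a) (f b)") auto
    qed
    show "has_white_Kr r X col" unfolding has_white_Kr_def
    proof (intro exI[of _ "f ` {1..r}"] conjI ballI impI)
      show "f ` {1..r} \<subseteq> (\<Union>i\<in>{1..r}. X i)" using fX by blast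
      show "card (f ` {1..r}) = r" using card_image[OF injf] by simp
      fix u v assume u: "u \<in> f ` {1..r}" and v: "v \<in> f ` {1..r}" and uv: "u \<noteq> v"
      then obtain a b where ab: "a \<in> {1..r}" "b \<in> {1..r}" "u = f a" "v = f b" by blast
      hence ne: "a \<noteq> b" using uv by blast
      show "is_edge r X u v" unfolding is_edge_def using ab ne fX by blast
      show "col u v = White" using white[OF ab(1,2) ne] ab by simp
    qed
  qed
qed simp

end
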